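(* Let $\Omega$ be a completely regular Hausdorff space with Stone–Čech compactification $\beta\Omega$. Let $A \subset C(\Omega, [0, 1])$, or let $A$ be a self-adjoint subalgebra of $C_{b}(\Omega, \mathbb{C})$. If $A$ separates disjoint zero-sets of $\Omega$, then for any $A$-antisymmetric $z$-filter $\mathcal{F}$ on $\Omega$, the set $\bigcap_{F \in \mathcal{F}}\mathrm{cl}_{\beta}F$ consists of exactly one point of $\beta \Omega$.
   Context: $\mathrm{cl}_\beta$ denotes closure in $\beta\Omega$; $C_b$ denotes bounded continuous functions. A zero-set is $h^{-1}(0)$ for some $h\in C(\Omega,\mathbb{R})$. $A$ separates disjoint zero-sets of $\Omega$ if for disjoint zero-sets $Z_1,Z_2$ there is $\varphi\in A$ with $\overline{\varphi(Z_1)}\cap\overline{\varphi(Z_2)}=\emptyset$. A $z$-filter is a nonempty family $\mathcal{F}$ of zero-sets with $\emptyset\notin\mathcal{F}$, closed under finite intersections and under passing to larger zero-sets. $\mathcal{F}$ is $A$-antisymmetric if for each $\phi\in A$ with $\bigcap_{F\in\mathcal{F}}\overline{\phi(F)}\subset[0,1]$ (closures in $\mathbb{C}\cup\{\infty\}$), this intersection is a single point. *)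

theory Defs
  imports "HOL-Analysis.Analysis"
begin

definition zero_set :: "'a topology \<Rightarrow> 'a set \<Rightarrow> bool" where
  "zero_set X Z \<longleftrightarrow>
     (\<exists>h::'a \<Rightarrow> real. continuous_map X euclideanreal h \<and> Z = {x \<in> topspace X. h x = 0})"

definition z_filter :: "'a topology \<Rightarrow> 'a set set \<Rightarrow> bool" where
  "z_filter X \<F> \<longleftrightarrow>
     \<F> \<noteq> {} \<and> (\<forall>F\<in>\<F>. zero_set X F) \<and> {} \<notin> \<F> \<and>
     (\<forall>F\<in>\<F>. \<forall>G\<in>\<F>. F \<inter> G \<in> \<F>) \<and>
     (\<forall>F\<in>\<F>. \<forall>Z. zero_set X Z \<and> F \<subseteq> Z \<longrightarrow> Z \<in> \<F>)"

text \<open>A separates disjoint zero-sets of X (closures of images taken in the complex plane;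
  all functions in question are bounded, so this agrees with closure in the Riemann sphere).\<close>
definition separates_zero_sets :: "'a topology \<Rightarrow> ('a \<Rightarrow> complex) set \<Rightarrow> bool" where
  "separates_zero_sets X A \<longleftrightarrow>
     (\<forall>Z1 Z2. zero_set X Z1 \<and> zero_set X Z2 \<and> Z1 \<inter> Z2 = {} \<longrightarrow>
        (\<exists>\<phi>\<in>A. closure (\<phi> ` Z1) \<inter> closure (\<phi> ` Z2) = {}))"

definition antisymmetric_filter :: "('a \<Rightarrow> complex) set \<Rightarrow> 'a set set \<Rightarrow> bool" where
  "antisymmetric_filter A \<F> \<longleftrightarrow>
     (\<forall>\<phi>\<in>A. (\<Inter>F\<in>\<F>. closure (\<phi> ` F)) \<subseteq> complex_of_real ` {0..1} \<longrightarrow>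
        (\<exists>c. (\<Inter>F\<in>\<F>. closure (\<phi> ` F)) = {c}))"

definition Cb :: "'a topology \<Rightarrow> ('a \<Rightarrow> complex) set" where
  "Cb X = {f. continuous_map X euclidean f \<and> bounded (f ` topspace X)}"

definition C01 :: "'a topology \<Rightarrow> ('a \<Rightarrow> complex) set" where
  "C01 X = {f. continuous_map X euclidean f \<and> f ` topspace X \<subseteq> complex_of_real ` {0..1}}"

definition self_adjoint_subalgebra :: "'a topology \<Rightarrow> ('a \<Rightarrow> complex) set \<Rightarrow> bool" where
  "self_adjoint_subalgebra X A \<longleftrightarrow>
     A \<subseteq> Cb X \<and> (\<lambda>x. 0) \<in> A \<and>
     (\<forall>f\<in>A. \<forall>g\<in>A. (\<lambda>x. f x + g x) \<in> A) \<and>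
     (\<forall>f\<in>A. \<forall>g\<in>A. (\<lambda>x. f x * g x) \<in> A) \<and>
     (\<forall>f\<in>A. \<forall>c::complex. (\<lambda>x. c * f x) \<in> A) \<and>
     (\<forall>f\<in>A. (\<lambda>x. cnj (f x)) \<in> A)"

text \<open>This characterizes beta X up to homeomorphism over X.\<close>
definition stone_cech :: "'a topology \<Rightarrow> 'b topology \<Rightarrow> ('a \<Rightarrow> 'b) \<Rightarrow> bool" where
  "stone_cech X K e \<longleftrightarrow>
     compact_space K \<and> Hausdorff_space K \<and> embedding_map X K e \<and>
     K closure_of (e ` topspace X) = topspace K \<and>
     (\<forall>f::'a \<Rightarrow> real. continuous_map X euclideanreal f \<and> bounded (f ` topspace X) \<longrightarrow>
        (\<exists>g. continuous_map K euclideanreal g \<and> (\<forall>x\<in>topspace X. g (e x) = f x)))"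

end

theory Submission
  imports Defs
begin

lemma emb_cont: "embedding_map X K e \<Longrightarrow> continuous_map X K e"
  unfolding embedding_map_def
  using homeomorphic_imp_continuous_map continuous_map_in_subtopology by blast

lemma clos_transfer:
  fixes g :: "'b \<Rightarrow> 'c::topological_space"
  assumes "continuous_map K euclidean g" "r \<in> K closure_of (e ` F)" "F \<subseteq> S"
    "\<forall>x\<in>S. g (e x) = f x"
  shows "g r \<in> closure (f ` F)"
proof -
  have "g r \<in> euclidean closure_of (g ` e ` F)"
    using continuous_map_image_closure_subset[OF assms(1)] assms(2) by blast
  moreover have "g ` e ` F = f ` F" using assms(3,4) by force
  ultimately show ?thesis by simp
qed

lemma closed_01: "closed (complex_of_real ` {0..1})"
  by (intro compact_imp_closed compact_continuous_image continuous_intros) auto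

lemma dense_pt:
  fixes g :: "'b \<Rightarrow> real"
  assumes g: "continuous_map K euclideanreal g" and ec: "continuous_map X K e"
    and dense: "K closure_of (e ` topspace X) = topspace K"
    and U: "open U" and p: "p \<in> topspace K" and gp: "g p \<in> U"
  shows "p \<in> K closure_of (e ` {x\<in>topspace X. g (e x) \<in> U})"
  unfolding in_closure_of
proof (intro conjI allI impI)
  show "p \<in> topspace K" by (rule p)
  fix T assume T: "p \<in> T \<and> openin K T"
  have o1: "openin K {y\<in>topspace K. g y \<in> U}"
    using U by (intro openin_continuous_map_preimage[OF g]) simp
  have o: "openin K (T \<inter> {y\<in>topspace K. g y \<in> U})"
    using T o1 by (intro openin_Int) simp_all
  have pin: "p \<in> T \<inter> {y\<in>topspace K. g y \<in> U}" using T p gp by simp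
  have "p \<in> K closure_of (e ` topspace X)" using dense p by simp
  then have H: "\<forall>T. p \<in> T \<and> openin K T \<longrightarrow> (\<exists>y. y \<in> e ` topspace X \<and> y \<in> T)"
    unfolding in_closure_of by simp
  obtain y where y: "y \<in> e ` topspace X" "y \<in> T \<inter> {y\<in>topspace K. g y \<in> U}"
    using H[rule_format, OF conjI[OF pin o]] by blast
  then obtain x where x: "x \<in> topspace X" "y = e x" by blast
  have "y \<in> e ` {x\<in>topspace X. g (e x) \<in> U}" using x y by simp
  then show "\<exists>y. y \<in> e ` {x \<in> topspace X. g (e x) \<in> U} \<and> y \<in> T" using y by blast
qed

lemma finite_inter_in:
  assumes "finite G" "G \<noteq> {}" "G \<subseteq> FF" "\<forall>F\<in>FF. \<forall>G\<in>FF. F \<inter> G \<in> FF"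
  shows "\<Inter>G \<in> FF"
  using assms by (induction G rule: finite_ne_induct) auto

lemma cube_inj:
  fixes a b :: real
  assumes "a^2 = b^2" "a^3 = b^3" shows "a = b"
proof -
  have "a = b \<or> a = -b" using assms(1) power2_eq_iff by blast
  then show ?thesis
  proof
    assume "a = -b"
    then have "a^3 = - (b^3)" by simp
    with assms(2) have "b^3 = 0" by simp
    then show ?thesis using \<open>a = -b\<close> by simp
  qed
qed

lemma poly_bound:
  fixes t M :: real
  assumes "\<bar>t\<bar> \<le> M" "M > 0"
  shows "0 \<le> (t^2 + t^3/(2*M)) / (2*M^2) \<and> (t^2 + t^3/(2*M)) / (2*M^2) \<le> 1"
proof -
  have e: "t^2 + t^3/(2*M) = t^2 * (1 + t/(2*M))" using assms by (simp add: field_simps power2_eq_square power3_eq_cube)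
  have h1: "0 \<le> 1 + t/(2*M)" "1 + t/(2*M) \<le> 2"
    using assms by (auto simp: field_simps abs_le_iff)
  have h2: "t^2 \<le> M^2" using power_mono[of "\<bar>t\<bar>" M 2] assms by simp
  have "t^2 * (1 + t/(2*M)) \<le> M^2 * 2"
    using h1 h2 by (intro mult_mono) auto
  moreover have "0 \<le> t^2 * (1 + t/(2*M))" using h1 by simp
  ultimately show ?thesis using assms unfolding e by (auto simp: field_simps)
qed

theorem corollary2p15:
  fixes X :: "'a topology" and K :: "'b topology" and e :: "'a \<Rightarrow> 'b"
    and A :: "('a \<Rightarrow> complex) set" and \<F> :: "'a set set"
  assumes "completely_regular_space X" and "Hausdorff_space X"
    and "stone_cech X K e"
    and "A \<subseteq> C01 X \<or> self_adjoint_subalgebra X A"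
    and "separates_zero_sets X A"
    and "z_filter X \<F>" and "antisymmetric_filter A \<F>"
  shows "\<exists>!p. p \<in> (\<Inter>F\<in>\<F>. K closure_of (e ` F))"
proof -
  have cK: "compact_space K" and hK: "Hausdorff_space K" and emb: "embedding_map X K e"
    and dense: "K closure_of (e ` topspace X) = topspace K"
    and ext: "\<And>f::'a\<Rightarrow>real. continuous_map X euclideanreal f \<Longrightarrow> bounded (f ` topspace X) \<Longrightarrow>
        \<exists>g. continuous_map K euclideanreal g \<and> (\<forall>x\<in>topspace X. g (e x) = f x)"
  proof -
    have sc: "compact_space K \<and> Hausdorff_space K \<and> embedding_map X K e \<and>
     K closure_of (e ` topspace X) = topspace K \<and>
     (\<forall>f::'a \<Rightarrow> real. continuous_map X euclideanreal f \<and> bounded (f ` topspace X) \<longrightarrow>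
        (\<exists>g. continuous_map K euclideanreal g \<and> (\<forall>x\<in>topspace X. g (e x) = f x)))"
      using assms(3) unfolding stone_cech_def .
    then show "compact_space K" "Hausdorff_space K" "embedding_map X K e"
      "K closure_of (e ` topspace X) = topspace K" by blast+
    fix f :: "'a\<Rightarrow>real"
    assume "continuous_map X euclideanreal f" "bounded (f ` topspace X)"
    then show "\<exists>g. continuous_map K euclideanreal g \<and> (\<forall>x\<in>topspace X. g (e x) = f x)"
      using sc by blast
  qed
  have ec: "continuous_map X K e" using emb by (rule emb_cont)
  have zs_sub: "Z \<subseteq> topspace X" if "zero_set X Z" for Z
    using that unfolding zero_set_def by blast
  have Fne: "\<F> \<noteq> {}" and Fz: "\<forall>F\<in>\<F>. zero_set X F" and Fe: "{} \<notin> \<F>"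
    and Fint: "\<forall>F\<in>\<F>. \<forall>G\<in>\<F>. F \<inter> G \<in> \<F>"
    using assms(6) unfolding z_filter_def by blast+
  have Fsub: "F \<subseteq> topspace X" if "F \<in> \<F>" for F using Fz zs_sub that by blast
  have ex: "(\<Inter>F\<in>\<F>. K closure_of (e ` F)) \<noteq> {}"
  proof -
    let ?U = "(\<lambda>F. K closure_of (e ` F)) ` \<F>"
    have fip: "\<And>U. (\<forall>C\<in>U. closedin K C) \<Longrightarrow> (\<forall>G. finite G \<and> G \<subseteq> U \<longrightarrow> \<Inter>G \<noteq> {}) \<Longrightarrow> \<Inter>U \<noteq> {}"
      using cK unfolding compact_space_fip by blast
    have "\<Inter>?U \<noteq> {}"
    proof (rule fip)
      show "\<forall>C\<in>?U. closedin K C" by auto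
      show "\<forall>G. finite G \<and> G \<subseteq> ?U \<longrightarrow> \<Inter>G \<noteq> {}"
      proof (intro allI impI)
        fix G assume G: "finite G \<and> G \<subseteq> ?U"
        from finite_subset_image[OF conjunct1[OF G] conjunct2[OF G]]
        obtain H where H: "H \<subseteq> \<F>" "finite H" "G = (\<lambda>F. K closure_of (e ` F)) ` H"
          by blast
        show "\<Inter>G \<noteq> {}"
        proof (cases "H = {}")
          case True then show ?thesis using H by simp
        next
          case False
          then have I: "\<Inter>H \<in> \<F>" using H Fint finite_inter_in by blast
          then have "\<Inter>H \<noteq> {}" using Fe by auto
          then obtain x where x: "x \<in> \<Inter>H" by blast
          have "e x \<in> K closure_of (e ` F)" if "F \<in> H" for F
          proof -
            have "e x \<in> e ` F" using x that by blast
            moreover have "e ` F \<subseteq> topspace K"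
              using Fsub[of F] H(1) that continuous_map_image_subset_topspace[OF ec] by blast
            ultimately show ?thesis using closure_of_subset by blast
          qed
          then show ?thesis using H by blast
        qed
      qed
    qed
    then show ?thesis by simp
  qed
  have uniq: "p = q" if p: "p \<in> (\<Inter>F\<in>\<F>. K closure_of (e ` F))"
    and q: "q \<in> (\<Inter>F\<in>\<F>. K closure_of (e ` F))" for p q
  proof (rule ccontr)
    assume pq: "p \<noteq> q"
    obtain F0 where F0: "F0 \<in> \<F>" using Fne by blast
    have pK: "p \<in> topspace K" using p F0 closure_of_subset_topspace by fastforce
    have qK: "q \<in> topspace K" using q F0 closure_of_subset_topspace by fastforce
    have key: "\<psi>h p = \<psi>h q" if psiA: "\<psi> \<in> A" and psi01: "\<psi> ` topspace X \<subseteq> complex_of_real ` {0..1}"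
      and psic: "continuous_map K euclidean \<psi>h" and psie: "\<forall>x\<in>topspace X. \<psi>h (e x) = \<psi> x"
      for \<psi> \<psi>h
    proof -
      let ?I = "\<Inter>F\<in>\<F>. closure (\<psi> ` F)"
      have inI: "\<psi>h r \<in> ?I" if r: "r \<in> (\<Inter>F\<in>\<F>. K closure_of (e ` F))" for r
      proof -
        have "\<psi>h r \<in> closure (\<psi> ` F)" if F: "F \<in> \<F>" for F
        proof -
          have "r \<in> K closure_of (e ` F)" using r F by simp
          then show ?thesis using clos_transfer[OF psic _ Fsub[OF F] psie] by simp
        qed
        then show ?thesis by simp
      qed
      have "?I \<subseteq> closure (\<psi> ` F0)" using F0 by (rule INT_lower)
      also have "\<dots> \<subseteq> closure (complex_of_real ` {0..1})"
        using psi01 Fsub[OF F0] by (intro closure_mono) blast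
      also have "\<dots> = complex_of_real ` {0..1}" using closed_01 by (rule closure_closed)
      finally have sub: "?I \<subseteq> complex_of_real ` {0..1}" .
      have "\<exists>c. ?I = {c}"
        using assms(7) psiA sub unfolding antisymmetric_filter_def by simp
      then obtain c where c: "?I = {c}" by blast
      have "\<psi>h p \<in> {c}" "\<psi>h q \<in> {c}" using inI[OF p] inI[OF q] unfolding c by auto
      then show ?thesis by simp
    qed
    have nK: "normal_space K"
      using cK hK by (simp add: compact_Hausdorff_or_regular_imp_normal_space)
    have crK: "completely_regular_space K"
      using nK hK by (simp add: normal_imp_completely_regular_space)
    have qcl: "closedin K {q}" using hK qK by (rule closedin_Hausdorff_singleton)
    have pnq: "p \<in> topspace K - {q}" using pK pq by simp
    have "\<forall>S x. closedin K S \<and> x \<in> topspace K - S \<longrightarrow> (\<exists>f::'b\<Rightarrow>real. continuous_map K (top_of_set {0..1}) f \<and>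
                  f x = 0 \<and> (f ` S \<subseteq> {1}))"
      using crK unfolding completely_regular_space_def .
    then have "\<exists>f::'b\<Rightarrow>real. continuous_map K (top_of_set {0..1}) f \<and> f p = 0 \<and> f ` {q} \<subseteq> {1}"
      using qcl pnq by blast
    then obtain g0 :: "'b \<Rightarrow> real" where g00: "continuous_map K (top_of_set {0..1}) g0" "g0 p = 0" "g0 ` {q} \<subseteq> {1}"
      by blast
    have g: "continuous_map K euclideanreal g0"
      using g00(1) by (simp add: continuous_map_in_subtopology)
    have gq: "g0 q = 1" using g00(3) by simp
    have gc: "continuous_map X euclideanreal (\<lambda>x. g0 (e x))"
      using continuous_map_compose[OF ec g] by (simp add: o_def)
    define Z1 where "Z1 = {x\<in>topspace X. g0 (e x) \<le> 1/3}"
    define Z2 where "Z2 = {x\<in>topspace X. g0 (e x) \<ge> 2/3}"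
    have Z1s: "Z1 \<subseteq> topspace X" and Z2s: "Z2 \<subseteq> topspace X" unfolding Z1_def Z2_def by auto
    have z1: "zero_set X Z1" unfolding zero_set_def
    proof (intro exI conjI)
      show "continuous_map X euclideanreal (\<lambda>x. max (g0 (e x) - 1/3) 0)"
        by (intro continuous_map_real_max continuous_map_diff gc) auto
      show "Z1 = {x \<in> topspace X. max (g0 (e x) - 1/3) 0 = 0}"
        unfolding Z1_def by (auto simp: max_def)
    qed
    have z2: "zero_set X Z2" unfolding zero_set_def
    proof (intro exI conjI)
      show "continuous_map X euclideanreal (\<lambda>x. max (2/3 - g0 (e x)) 0)"
        by (intro continuous_map_real_max continuous_map_diff gc) auto
      show "Z2 = {x \<in> topspace X. max (2/3 - g0 (e x)) 0 = 0}"
        unfolding Z2_def by (auto simp: max_def)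
    qed
    have dj: "Z1 \<inter> Z2 = {}" unfolding Z1_def Z2_def by auto
    have pZ1: "p \<in> K closure_of (e ` Z1)"
    proof -
      have "p \<in> K closure_of (e ` {x\<in>topspace X. g0 (e x) \<in> {..<1/3}})"
        using g00(2) by (intro dense_pt[OF g ec dense _ pK]) auto
      moreover have "e ` {x\<in>topspace X. g0 (e x) \<in> {..<1/3}} \<subseteq> e ` Z1"
        unfolding Z1_def by auto
      ultimately show ?thesis using closure_of_mono by blast
    qed
    have qZ2: "q \<in> K closure_of (e ` Z2)"
    proof -
      have "q \<in> K closure_of (e ` {x\<in>topspace X. g0 (e x) \<in> {2/3<..}})"
        using gq by (intro dense_pt[OF g ec dense _ qK]) auto
      moreover have "e ` {x\<in>topspace X. g0 (e x) \<in> {2/3<..}} \<subseteq> e ` Z2"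
        unfolding Z2_def by auto
      ultimately show ?thesis using closure_of_mono by blast
    qed
    obtain \<phi> where phiA: "\<phi> \<in> A" and phisep: "closure (\<phi> ` Z1) \<inter> closure (\<phi> ` Z2) = {}"
      using assms(5) z1 z2 dj unfolding separates_zero_sets_def by blast
    have phiCb: "\<phi> \<in> Cb X"
      using assms(4)
    proof
      assume "A \<subseteq> C01 X"
      then have "\<phi> \<in> C01 X" using phiA by blast
      then have c: "continuous_map X euclidean \<phi>" and r: "\<phi> ` topspace X \<subseteq> complex_of_real ` {0..1}"
        unfolding C01_def by auto
      have "bounded (complex_of_real ` {0..1})"
        by (intro compact_imp_bounded compact_continuous_image continuous_intros) auto
      then have "bounded (\<phi> ` topspace X)" using r bounded_subset by blast
      then show ?thesis using c unfolding Cb_def by simp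
    next
      assume "self_adjoint_subalgebra X A"
      then show ?thesis using phiA unfolding self_adjoint_subalgebra_def by blast
    qed
    then have phic: "continuous_map X euclidean \<phi>" and phib: "bounded (\<phi> ` topspace X)"
      unfolding Cb_def by auto
    have ReC: "continuous_map euclidean euclideanreal Re" by (simp add: continuous_on_Re continuous_on_id)
    have ImC: "continuous_map euclidean euclideanreal Im" by (simp add: continuous_on_Im continuous_on_id)
    have "continuous_map X euclideanreal (\<lambda>x. Re (\<phi> x))"
      using continuous_map_compose[OF phic ReC] by (simp add: o_def)
    moreover have "bounded ((\<lambda>x. Re (\<phi> x)) ` topspace X)"
      using bounded_linear_image[OF phib bounded_linear_Re] by (simp add: image_image)
    ultimately obtain g1 where g1: "continuous_map K euclideanreal g1" "\<forall>x\<in>topspace X. g1 (e x) = Re (\<phi> x)"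
      using ext by blast
    have "continuous_map X euclideanreal (\<lambda>x. Im (\<phi> x))"
      using continuous_map_compose[OF phic ImC] by (simp add: o_def)
    moreover have "bounded ((\<lambda>x. Im (\<phi> x)) ` topspace X)"
      using bounded_linear_image[OF phib bounded_linear_Im] by (simp add: image_image)
    ultimately obtain g2 where g2: "continuous_map K euclideanreal g2" "\<forall>x\<in>topspace X. g2 (e x) = Im (\<phi> x)"
      using ext by blast
    define \<phi>h where "\<phi>h = (\<lambda>y. complex_of_real (g1 y) + \<i> * complex_of_real (g2 y))"
    have ofc: "continuous_map euclideanreal euclidean (\<lambda>t::real. complex_of_real t)"
      by (simp add: continuous_on_of_real continuous_on_id)
    have ofc2: "continuous_map euclideanreal euclidean (\<lambda>t::real. \<i> * complex_of_real t)"
      by (simp add: continuous_on_mult continuous_on_const continuous_on_of_real continuous_on_id)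
    have phihc: "continuous_map K euclidean \<phi>h"
      unfolding \<phi>h_def
      using continuous_map_add[OF continuous_map_compose[OF g1(1) ofc] continuous_map_compose[OF g2(1) ofc2]]
      by (simp add: o_def)
    have phihe: "\<forall>x\<in>topspace X. \<phi>h (e x) = \<phi> x"
      using g1(2) g2(2) unfolding \<phi>h_def by (simp add: complex_eq_iff)
    have ReH: "Re (\<phi>h y) = g1 y" and ImH: "Im (\<phi>h y) = g2 y" for y unfolding \<phi>h_def by simp_all
    have c1: "\<phi>h p \<in> closure (\<phi> ` Z1)"
      using clos_transfer[of K \<phi>h p e Z1 "topspace X" \<phi>] phihc pZ1 Z1s phihe by simp
    have c2: "\<phi>h q \<in> closure (\<phi> ` Z2)"
      using clos_transfer[of K \<phi>h q e Z2 "topspace X" \<phi>] phihc qZ2 Z2s phihe by simp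
    have neq: "\<phi>h p \<noteq> \<phi>h q"
    proof
      assume "\<phi>h p = \<phi>h q"
      then have "\<phi>h p \<in> closure (\<phi> ` Z1) \<inter> closure (\<phi> ` Z2)" using c1 c2 by simp
      then show False using phisep by simp
    qed
    show False
      using assms(4)
    proof
      assume "A \<subseteq> C01 X"
      then have "\<phi> ` topspace X \<subseteq> complex_of_real ` {0..1}" using phiA unfolding C01_def by blast
      then have "\<phi>h p = \<phi>h q" using key[OF phiA _ phihc phihe] by blast
      then show False using neq by blast
    next
      assume SA: "self_adjoint_subalgebra X A"
      have Aadd: "\<And>f g. f \<in> A \<Longrightarrow> g \<in> A \<Longrightarrow> (\<lambda>x. f x + g x) \<in> A"
        and Amul: "\<And>f g. f \<in> A \<Longrightarrow> g \<in> A \<Longrightarrow> (\<lambda>x. f x * g x) \<in> A"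
        and Asc: "\<And>f c. f \<in> A \<Longrightarrow> (\<lambda>x. c * f x) \<in> A"
        and Acnj: "\<And>f. f \<in> A \<Longrightarrow> (\<lambda>x. cnj (f x)) \<in> A"
        using SA unfolding self_adjoint_subalgebra_def by blast+
      obtain M where M: "M > 0" "\<forall>z\<in>\<phi> ` topspace X. norm z \<le> M"
        using phib bounded_pos by blast
      have R: "rh p = rh q" if uA: "(\<lambda>x. complex_of_real (r x)) \<in> A"
        and rhc: "continuous_map K euclideanreal rh" and rhe: "\<forall>x\<in>topspace X. rh (e x) = r x"
        and rb: "\<forall>x\<in>topspace X. \<bar>r x\<bar> \<le> M" for r rh
      proof -
        let ?u = "\<lambda>x. complex_of_real (r x)"
        have uu: "(\<lambda>x. ?u x * ?u x) \<in> A" using Amul[OF uA uA] .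
        have uuu: "(\<lambda>x. ?u x * (?u x * ?u x)) \<in> A" using Amul[OF uA uu] .
        define \<psi>1 where "\<psi>1 = (\<lambda>x. complex_of_real (1/M^2) * (?u x * ?u x))"
        have p1A: "\<psi>1 \<in> A" unfolding \<psi>1_def by (rule Asc[OF uu])
        have p1eq: "\<psi>1 x = complex_of_real ((r x)^2/M^2)" for x
          unfolding \<psi>1_def by (simp add: power2_eq_square)
        have p1r: "\<psi>1 ` topspace X \<subseteq> complex_of_real ` {0..1}"
        proof (clarify)
          fix x assume x: "x \<in> topspace X"
          have "\<bar>r x\<bar> \<le> M" using rb x by blast
          then have "(r x)^2 \<le> M^2" using power_mono[of "\<bar>r x\<bar>" M 2] by simp
          then have "(r x)^2/M^2 \<in> {0..1}" using M(1) by auto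
          then show "\<psi>1 x \<in> complex_of_real ` {0..1}" unfolding p1eq by blast
        qed
        define \<psi>1h where "\<psi>1h = (\<lambda>y. complex_of_real ((rh y)^2/M^2))"
        have p1hc: "continuous_map K euclidean \<psi>1h"
        proof -
          have "continuous_map euclideanreal euclidean (\<lambda>t::real. complex_of_real (t^2/M^2))"
            using M(1) by simp (intro continuous_intros, auto)
          from continuous_map_compose[OF rhc this] show ?thesis unfolding \<psi>1h_def by (simp add: o_def)
        qed
        have p1he: "\<forall>x\<in>topspace X. \<psi>1h (e x) = \<psi>1 x"
          using rhe unfolding \<psi>1h_def p1eq by simp
        have "\<psi>1h p = \<psi>1h q" by (rule key[OF p1A p1r p1hc p1he])
        then have "complex_of_real ((rh p)^2/M^2) = complex_of_real ((rh q)^2/M^2)"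
          unfolding \<psi>1h_def .
        then have "(rh p)^2/M^2 = (rh q)^2/M^2" by (simp only: of_real_eq_iff)
        then have sq: "(rh p)^2 = (rh q)^2" using M(1) by simp
        define \<psi>2 where "\<psi>2 = (\<lambda>x. complex_of_real (1/(2*M^2)) * (?u x * ?u x)
                                 + complex_of_real (1/(4*M^3)) * (?u x * (?u x * ?u x)))"
        have p2A: "\<psi>2 \<in> A" unfolding \<psi>2_def by (rule Aadd[OF Asc[OF uu] Asc[OF uuu]])
        have p2eq: "\<psi>2 x = complex_of_real (((r x)^2 + (r x)^3/(2*M))/(2*M^2))" for x
        proof -
          have "((r x)^2 + (r x)^3/(2*M))/(2*M^2) = (1/(2*M^2)) * (r x * r x) + (1/(4*M^3)) * (r x * (r x * r x))"
            using M(1) by (simp add: field_simps power2_eq_square power3_eq_cube)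
          then show ?thesis unfolding \<psi>2_def by simp
        qed
        have p2r: "\<psi>2 ` topspace X \<subseteq> complex_of_real ` {0..1}"
        proof (clarify)
          fix x assume x: "x \<in> topspace X"
          have "\<bar>r x\<bar> \<le> M" using rb x by blast
          then have "((r x)^2 + (r x)^3/(2*M))/(2*M^2) \<in> {0..1}" using poly_bound[OF _ M(1)] by auto
          then show "\<psi>2 x \<in> complex_of_real ` {0..1}" unfolding p2eq by blast
        qed
        define \<psi>2h where "\<psi>2h = (\<lambda>y. complex_of_real (((rh y)^2 + (rh y)^3/(2*M))/(2*M^2)))"
        have p2hc: "continuous_map K euclidean \<psi>2h"
        proof -
          have "continuous_map euclideanreal euclidean (\<lambda>t::real. complex_of_real ((t^2 + t^3/(2*M))/(2*M^2)))"
            using M(1) by simp (intro continuous_intros, auto)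
          from continuous_map_compose[OF rhc this] show ?thesis unfolding \<psi>2h_def by (simp add: o_def)
        qed
        have p2he: "\<forall>x\<in>topspace X. \<psi>2h (e x) = \<psi>2 x"
          using rhe unfolding \<psi>2h_def p2eq by simp
        have "\<psi>2h p = \<psi>2h q" by (rule key[OF p2A p2r p2hc p2he])
        then have "complex_of_real (((rh p)^2 + (rh p)^3/(2*M))/(2*M^2)) = complex_of_real (((rh q)^2 + (rh q)^3/(2*M))/(2*M^2))"
          unfolding \<psi>2h_def .
        then have "((rh p)^2 + (rh p)^3/(2*M))/(2*M^2) = ((rh q)^2 + (rh q)^3/(2*M))/(2*M^2)"
          by (simp only: of_real_eq_iff)
        then have "(rh p)^3/(2*M) = (rh q)^3/(2*M)" using M(1) sq by simp
        then have "(rh p)^3 = (rh q)^3" using M(1) by simp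
        then show ?thesis using cube_inj sq by blast
      qed
      have reA: "(\<lambda>x. complex_of_real (Re (\<phi> x))) \<in> A"
      proof -
        have "(\<lambda>x. (1/2) * (\<phi> x + cnj (\<phi> x))) \<in> A" by (intro Asc Aadd phiA Acnj)
        moreover have "(\<lambda>x. (1/2) * (\<phi> x + cnj (\<phi> x))) = (\<lambda>x. complex_of_real (Re (\<phi> x)))"
          by (simp add: fun_eq_iff complex_eq_iff)
        ultimately show ?thesis by simp
      qed
      have imA: "(\<lambda>x. complex_of_real (Im (\<phi> x))) \<in> A"
      proof -
        have "(\<lambda>x. (-\<i>/2) * (\<phi> x + (-1) * cnj (\<phi> x))) \<in> A" by (intro Asc Aadd phiA Acnj)
        moreover have "(\<lambda>x. (-\<i>/2) * (\<phi> x + (-1) * cnj (\<phi> x))) = (\<lambda>x. complex_of_real (Im (\<phi> x)))"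
          by (simp add: fun_eq_iff complex_eq_iff)
        ultimately show ?thesis by simp
      qed
      have "\<forall>x\<in>topspace X. \<bar>Re (\<phi> x)\<bar> \<le> M" using M(2) abs_Re_le_cmod order_trans by fastforce
      then have "g1 p = g1 q" using R[OF reA g1] by blast
      moreover have "\<forall>x\<in>topspace X. \<bar>Im (\<phi> x)\<bar> \<le> M" using M(2) abs_Im_le_cmod order_trans by fastforce
      then have "g2 p = g2 q" using R[OF imA g2] by blast
      ultimately have "\<phi>h p = \<phi>h q" by (simp add: complex_eq_iff ReH ImH)
      then show False using neq by blast
    qed
  qed
  show ?thesis using ex uniq by blast
qed

end
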